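(* Let $(V,L,\varphi,E)$ be a valuation system. Suppose there exist a sublattice $C$ of $V$ and a valuation $\psi:C\to E$ such that $\psi$ extends $\varphi$ and $(V,C,\psi,E)$ is complete. Then there is a sublattice $\overline L$ of $V$ and a valuation $\overline\varphi:\overline L\to E$ such that $\overline\varphi$ extends $\varphi$, $(V,\overline L,\overline\varphi,E)$ is complete, and $\psi'$ extends $\overline\varphi$ for every sublattice $C'$ of $V$ and every valuation $\psi':C'\to E$ that extends $\varphi$ and for which $(V,C',\psi',E)$ is complete. Moreover, $\varphi$ is $\Pi_\xi$-extendible and $\overline\varphi=\Pi_\xi\varphi$ for some ordinal number $\xi$.
   Context: A valuation system $(V,L,\varphi,E)$ consists of: (i) a lattice $V$ which is $\sigma$-distributive, i.e. for every $a\in V$ and every sequence $(b_n)$ in $V$ whose infimum exists, $\bigwedge_n(a\vee b_n)$ exists and equals $a\vee\bigwedge_n b_n$, and dually whenever $\bigvee_n b_n$ exists, $\bigvee_n(a\wedge b_n)$ exists and equals $a\wedge\bigvee_n b_n$; (ii) a sublattice $L$ of $V$; (iii) a partially ordered abelian group $E$ which is R-complete: whenever $x_1\ge x_2\ge\cdots$ and $y_1\ge y_2\ge\cdots$ in $E$ are such that $\bigwedge_n(x_n+y_n)$ exists, then $\bigwedge_n x_n$ and $\bigwedge_n y_n$ exist, and dually for increasing sequences and suprema; (iv) a valuation $\varphi:L\to E$, i.e. an order-preserving map with $\varphi(a\wedge b)+\varphi(a\vee b)=\varphi(a)+\varphi(b)$. A map $\psi:C\to E$ extends $\varphi:L\to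 E$ if $L\subseteq C$ and $\psi|_L=\varphi$. A decreasing sequence $(a_n)$ in $L$ is $\varphi$-convergent if $\bigwedge_n a_n$ exists in $V$ and $\bigwedge_n\varphi(a_n)$ exists in $E$; an increasing sequence $(a_n)$ is $\varphi$-convergent if $\bigvee_n a_n$ exists in $V$ and $\bigvee_n\varphi(a_n)$ exists in $E$. The system is $\Pi$-complete if for every $\varphi$-convergent decreasing $(a_n)$ in $L$, $\bigwedge_n a_n\in L$ and $\varphi(\bigwedge_n a_n)=\bigwedge_n\varphi(a_n)$; $\Sigma$-complete dually with increasing sequences and suprema; complete if both. $\Pi L:=\{\bigwedge_n a_n:(a_n)\ \varphi\text{-convergent decreasing in }L\}$, and $\varphi$ is $\Pi$-extendible if there is a valuation $\Pi\varphi:\Pi L\to E$ with $\Pi\varphi(\bigwedge_n a_n)=\bigwedge_n\varphi(a_n)$ for all such sequences; $\Sigma L$, $\Sigma$-extendible and $\Sigma\varphi$ are defined dually. The hierarchy is defined by transfinite recursion: $\varphi$ is $\Pi_0$- and $\Sigma_0$-extendible with $\Pi_0\varphi=\Sigma_0\varphi=\varphi$ (on $\Pi_0L=\Sigma_0L=L$); $\varphi$ is $\Pi_{\alpha+1}$-extendible iff $\varphi$ is $\Sigma_\alpha$-extendible and $\Sigma_\alpha\varphi$ is $\Pi$-extendible, and then $\Pi_{\alpha+1}L=\Pi(\Sigma_\alpha L)$, $\Pi_{\alpha+1}\varphi=\Pi(\Sigma_\alpha\varphi)$; $\varphi$ is $\Sigma_{\alpha+1}$-extendible iff $\varphi$ is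 $\Pi_\alpha$-extendible and $\Pi_\alpha\varphi$ is $\Sigma$-extendible, and then $\Sigma_{\alpha+1}L=\Sigma(\Pi_\alpha L)$, $\Sigma_{\alpha+1}\varphi=\Sigma(\Pi_\alpha\varphi)$; for a limit ordinal $\lambda$, $\varphi$ is $\Pi_\lambda$-extendible iff it is $\Pi_\alpha$-extendible for all $\alpha<\lambda$, and then $\Pi_\lambda L=\bigcup_{\alpha<\lambda}\Pi_\alpha L$ and $\Pi_\lambda\varphi(c)=\Pi_\beta\varphi(c)$ for $c\in\Pi_\beta L$, $\beta<\lambda$; similarly for $\Sigma_\lambda$. *)

theory Defs
  imports Main
begin

definition is_inf_seq :: "(nat \<Rightarrow> 'a::order) \<Rightarrow> 'a \<Rightarrow> bool" where
  "is_inf_seq a x \<longleftrightarrow> (\<forall>n. x \<le> a n) \<and> (\<forall>y. (\<forall>n. y \<le> a n) \<longrightarrow> y \<le> x)"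

definition is_sup_seq :: "(nat \<Rightarrow> 'a::order) \<Rightarrow> 'a \<Rightarrow> bool" where
  "is_sup_seq a x \<longleftrightarrow> (\<forall>n. a n \<le> x) \<and> (\<forall>y. (\<forall>n. a n \<le> y) \<longrightarrow> x \<le> y)"

definition has_inf_seq :: "(nat \<Rightarrow> 'a::order) \<Rightarrow> bool" where
  "has_inf_seq a \<longleftrightarrow> (\<exists>x. is_inf_seq a x)"

definition has_sup_seq :: "(nat \<Rightarrow> 'a::order) \<Rightarrow> bool" where
  "has_sup_seq a \<longleftrightarrow> (\<exists>x. is_sup_seq a x)"

definition inf_seq :: "(nat \<Rightarrow> 'a::order) \<Rightarrow> 'a" where
  "inf_seq a = (THE x. is_inf_seq a x)"

definition sup_seq :: "(nat \<Rightarrow> 'a::order) \<Rightarrow> 'a" where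
  "sup_seq a = (THE x. is_sup_seq a x)"

text \<open>The lattice V is the whole type 'v. sigma-distributivity of V:\<close>
definition sigma_distributive :: "'v::lattice itself \<Rightarrow> bool" where
  "sigma_distributive _ \<longleftrightarrow>
     (\<forall>(a::'v) b. has_inf_seq b \<longrightarrow>
        has_inf_seq (\<lambda>n. sup a (b n)) \<and> inf_seq (\<lambda>n. sup a (b n)) = sup a (inf_seq b)) \<and>
     (\<forall>(a::'v) b. has_sup_seq b \<longrightarrow>
        has_sup_seq (\<lambda>n. inf a (b n)) \<and> sup_seq (\<lambda>n. inf a (b n)) = inf a (sup_seq b))"

definition R_complete :: "'e::ordered_ab_group_add itself \<Rightarrow> bool" where
  "R_complete _ \<longleftrightarrow>
     (\<forall>(x::nat \<Rightarrow> 'e) y. antimono x \<and> antimono y \<and> has_inf_seq (\<lambda>n. x n + y n) \<longrightarrow>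
        has_inf_seq x \<and> has_inf_seq y) \<and>
     (\<forall>(x::nat \<Rightarrow> 'e) y. mono x \<and> mono y \<and> has_sup_seq (\<lambda>n. x n + y n) \<longrightarrow>
        has_sup_seq x \<and> has_sup_seq y)"

definition sublattice :: "'v::lattice set \<Rightarrow> bool" where
  "sublattice L \<longleftrightarrow> (\<forall>a\<in>L. \<forall>b\<in>L. inf a b \<in> L \<and> sup a b \<in> L)"

text \<open>A valuation phi : L -> E (only the values on L matter).\<close>
definition valuation :: "'v::lattice set \<Rightarrow> ('v \<Rightarrow> 'e::ordered_ab_group_add) \<Rightarrow> bool" where
  "valuation L \<phi> \<longleftrightarrow>
     (\<forall>a\<in>L. \<forall>b\<in>L. a \<le> b \<longrightarrow> \<phi> a \<le> \<phi> b) \<and>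
     (\<forall>a\<in>L. \<forall>b\<in>L. \<phi> (inf a b) + \<phi> (sup a b) = \<phi> a + \<phi> b)"

definition valuation_system :: "'v::lattice set \<Rightarrow> ('v \<Rightarrow> 'e::ordered_ab_group_add) \<Rightarrow> bool" where
  "valuation_system L \<phi> \<longleftrightarrow>
     sigma_distributive TYPE('v) \<and> sublattice L \<and> R_complete TYPE('e) \<and> valuation L \<phi>"

definition extends :: "'v set \<Rightarrow> ('v \<Rightarrow> 'e) \<Rightarrow> 'v set \<Rightarrow> ('v \<Rightarrow> 'e) \<Rightarrow> bool" where
  "extends C \<psi> L \<phi> \<longleftrightarrow> L \<subseteq> C \<and> (\<forall>a\<in>L. \<psi> a = \<phi> a)"

definition conv_dec :: "'v::lattice set \<Rightarrow> ('v \<Rightarrow> 'e::ordered_ab_group_add) \<Rightarrow> (nat \<Rightarrow> 'v) \<Rightarrow> bool" where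
  "conv_dec L \<phi> a \<longleftrightarrow> (\<forall>n. a n \<in> L) \<and> antimono a \<and> has_inf_seq a \<and> has_inf_seq (\<lambda>n. \<phi> (a n))"

definition conv_inc :: "'v::lattice set \<Rightarrow> ('v \<Rightarrow> 'e::ordered_ab_group_add) \<Rightarrow> (nat \<Rightarrow> 'v) \<Rightarrow> bool" where
  "conv_inc L \<phi> a \<longleftrightarrow> (\<forall>n. a n \<in> L) \<and> mono a \<and> has_sup_seq a \<and> has_sup_seq (\<lambda>n. \<phi> (a n))"

definition Pi_complete :: "'v::lattice set \<Rightarrow> ('v \<Rightarrow> 'e::ordered_ab_group_add) \<Rightarrow> bool" where
  "Pi_complete L \<phi> \<longleftrightarrow>
     (\<forall>a. conv_dec L \<phi> a \<longrightarrow> inf_seq a \<in> L \<and> \<phi> (inf_seq a) = inf_seq (\<lambda>n. \<phi> (a n)))"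

definition Sigma_complete :: "'v::lattice set \<Rightarrow> ('v \<Rightarrow> 'e::ordered_ab_group_add) \<Rightarrow> bool" where
  "Sigma_complete L \<phi> \<longleftrightarrow>
     (\<forall>a. conv_inc L \<phi> a \<longrightarrow> sup_seq a \<in> L \<and> \<phi> (sup_seq a) = sup_seq (\<lambda>n. \<phi> (a n)))"

definition complete :: "'v::lattice set \<Rightarrow> ('v \<Rightarrow> 'e::ordered_ab_group_add) \<Rightarrow> bool" where
  "complete L \<phi> \<longleftrightarrow> Pi_complete L \<phi> \<and> Sigma_complete L \<phi>"

definition PiL :: "'v::lattice set \<Rightarrow> ('v \<Rightarrow> 'e::ordered_ab_group_add) \<Rightarrow> 'v set" where
  "PiL L \<phi> = {inf_seq a | a. conv_dec L \<phi> a}"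

definition SigmaL :: "'v::lattice set \<Rightarrow> ('v \<Rightarrow> 'e::ordered_ab_group_add) \<Rightarrow> 'v set" where
  "SigmaL L \<phi> = {sup_seq a | a. conv_inc L \<phi> a}"

definition is_Pi_ext :: "'v::lattice set \<Rightarrow> ('v \<Rightarrow> 'e::ordered_ab_group_add) \<Rightarrow> ('v \<Rightarrow> 'e) \<Rightarrow> bool" where
  "is_Pi_ext L \<phi> \<psi> \<longleftrightarrow> valuation (PiL L \<phi>) \<psi> \<and>
     (\<forall>a. conv_dec L \<phi> a \<longrightarrow> \<psi> (inf_seq a) = inf_seq (\<lambda>n. \<phi> (a n)))"

definition is_Sigma_ext :: "'v::lattice set \<Rightarrow> ('v \<Rightarrow> 'e::ordered_ab_group_add) \<Rightarrow> ('v \<Rightarrow> 'e) \<Rightarrow> bool" where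
  "is_Sigma_ext L \<phi> \<psi> \<longleftrightarrow> valuation (SigmaL L \<phi>) \<psi> \<and>
     (\<forall>a. conv_inc L \<phi> a \<longrightarrow> \<psi> (sup_seq a) = sup_seq (\<lambda>n. \<phi> (a n)))"

definition Pi_extendible :: "'v::lattice set \<Rightarrow> ('v \<Rightarrow> 'e::ordered_ab_group_add) \<Rightarrow> bool" where
  "Pi_extendible L \<phi> \<longleftrightarrow> (\<exists>\<psi>. is_Pi_ext L \<phi> \<psi>)"

definition Sigma_extendible :: "'v::lattice set \<Rightarrow> ('v \<Rightarrow> 'e::ordered_ab_group_add) \<Rightarrow> bool" where
  "Sigma_extendible L \<phi> \<longleftrightarrow> (\<exists>\<psi>. is_Sigma_ext L \<phi> \<psi>)"

text \<open>The extension Pi phi (meaningful on PiL L phi when Pi-extendible; it is uniquely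
  determined there by its defining property).\<close>
definition Pi_fun :: "'v::lattice set \<Rightarrow> ('v \<Rightarrow> 'e::ordered_ab_group_add) \<Rightarrow> 'v \<Rightarrow> 'e" where
  "Pi_fun L \<phi> = (SOME \<psi>. is_Pi_ext L \<phi> \<psi>)"

definition Sigma_fun :: "'v::lattice set \<Rightarrow> ('v \<Rightarrow> 'e::ordered_ab_group_add) \<Rightarrow> 'v \<Rightarrow> 'e" where
  "Sigma_fun L \<phi> = (SOME \<psi>. is_Sigma_ext L \<phi> \<psi>)"

text \<open>Ordinals are represented by elements of the field of a well-order r: the element i
  stands for the order type of its strict initial segment underS r i.
  A stage records (Pi_alpha L, Pi_alpha phi, Pi_alpha-extendible,
                   Sigma_alpha L, Sigma_alpha phi, Sigma_alpha-extendible).\<close>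

record ('v, 'e) stage =
  PL :: "'v set"
  Pf :: "'v \<Rightarrow> 'e"
  Pok :: bool
  SL :: "'v set"
  Sf :: "'v \<Rightarrow> 'e"
  Sok :: bool

definition hier_step ::
  "'i rel \<Rightarrow> 'v::lattice set \<Rightarrow> ('v \<Rightarrow> 'e::ordered_ab_group_add)
    \<Rightarrow> ('i \<Rightarrow> ('v, 'e) stage) \<Rightarrow> 'i \<Rightarrow> ('v, 'e) stage" where
  "hier_step r L \<phi> F i =
    (if underS r i = {} then
       \<lparr>PL = L, Pf = \<phi>, Pok = True, SL = L, Sf = \<phi>, Sok = True\<rparr>
     else if (\<exists>j\<in>underS r i. underS r i = insert j (underS r j)) then
       (let j = (SOME j. j \<in> underS r i \<and> underS r i = insert j (underS r j)); s = F j in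
        \<lparr>PL = PiL (SL s) (Sf s), Pf = Pi_fun (SL s) (Sf s),
         Pok = (Sok s \<and> Pi_extendible (SL s) (Sf s)),
         SL = SigmaL (PL s) (Pf s), Sf = Sigma_fun (PL s) (Pf s),
         Sok = (Pok s \<and> Sigma_extendible (PL s) (Pf s))\<rparr>)
     else
       \<lparr>PL = (\<Union>j\<in>underS r i. PL (F j)),
        Pf = (\<lambda>c. Pf (F (SOME j. j \<in> underS r i \<and> c \<in> PL (F j))) c),
        Pok = (\<forall>j\<in>underS r i. Pok (F j)),
        SL = (\<Union>j\<in>underS r i. SL (F j)),
        Sf = (\<lambda>c. Sf (F (SOME j. j \<in> underS r i \<and> c \<in> SL (F j))) c),
        Sok = (\<forall>j\<in>underS r i. Sok (F j))\<rparr>)"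

definition hier :: "'i rel \<Rightarrow> 'v::lattice set \<Rightarrow> ('v \<Rightarrow> 'e::ordered_ab_group_add) \<Rightarrow> 'i \<Rightarrow> ('v, 'e) stage" where
  "hier r L \<phi> = wfrec (r - Id) (hier_step r L \<phi>)"

definition Pi_level_extendible :: "'i rel \<Rightarrow> 'i \<Rightarrow> 'v::lattice set \<Rightarrow> ('v \<Rightarrow> 'e::ordered_ab_group_add) \<Rightarrow> bool" where
  "Pi_level_extendible r i L \<phi> = Pok (hier r L \<phi> i)"

definition Pi_level_L :: "'i rel \<Rightarrow> 'i \<Rightarrow> 'v::lattice set \<Rightarrow> ('v \<Rightarrow> 'e::ordered_ab_group_add) \<Rightarrow> 'v set" where
  "Pi_level_L r i L \<phi> = PL (hier r L \<phi> i)"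

definition Pi_level_fun :: "'i rel \<Rightarrow> 'i \<Rightarrow> 'v::lattice set \<Rightarrow> ('v \<Rightarrow> 'e::ordered_ab_group_add) \<Rightarrow> 'v \<Rightarrow> 'e" where
  "Pi_level_fun r i L \<phi> = Pf (hier r L \<phi> i)"

end

theory Submission
  imports Defs "HOL-Library.Countable_Set"
begin

lemma is_inf_seq_unique: "is_inf_seq a x \<Longrightarrow> inf_seq a = x"
  unfolding inf_seq_def
  by (rule the_equality) (auto simp: is_inf_seq_def intro: order.antisym)

lemma is_sup_seq_unique: "is_sup_seq a x \<Longrightarrow> sup_seq a = x"
  unfolding sup_seq_def
  by (rule the_equality) (auto simp: is_sup_seq_def intro: order.antisym)

lemma has_inf_seqD: "has_inf_seq a \<Longrightarrow> is_inf_seq a (inf_seq a)"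
  unfolding has_inf_seq_def using is_inf_seq_unique by metis

lemma has_sup_seqD: "has_sup_seq a \<Longrightarrow> is_sup_seq a (sup_seq a)"
  unfolding has_sup_seq_def using is_sup_seq_unique by metis

lemma is_inf_const: "is_inf_seq (\<lambda>n. x) x" by (simp add: is_inf_seq_def)
lemma is_sup_const: "is_sup_seq (\<lambda>n. x) x" by (simp add: is_sup_seq_def)

lemma is_inf_inf:
  fixes a b :: "nat \<Rightarrow> 'v::lattice"
  shows "is_inf_seq a x \<Longrightarrow> is_inf_seq b y \<Longrightarrow> is_inf_seq (\<lambda>n. inf (a n) (b n)) (inf x y)"
  unfolding is_inf_seq_def by (auto intro: le_infI1 le_infI2)

lemma is_sup_sup:
  fixes a b :: "nat \<Rightarrow> 'v::lattice"
  shows "is_sup_seq a x \<Longrightarrow> is_sup_seq b y \<Longrightarrow> is_sup_seq (\<lambda>n. sup (a n) (b n)) (sup x y)"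
  unfolding is_sup_seq_def by (auto intro: le_supI1 le_supI2)

lemma is_inf_sup:
  fixes a b :: "nat \<Rightarrow> 'v::lattice"
  assumes sd: "sigma_distributive TYPE('v)" and am: "antimono a" "antimono b"
    and ia: "is_inf_seq a x" and ib: "is_inf_seq b y"
  shows "is_inf_seq (\<lambda>n. sup (a n) (b n)) (sup x y)"
proof -
  have d1: "\<And>c (s::nat\<Rightarrow>'v) w. is_inf_seq s w \<Longrightarrow> is_inf_seq (\<lambda>n. sup c (s n)) (sup c w)"
  proof -
    fix c and s :: "nat \<Rightarrow> 'v" and w
    assume h: "is_inf_seq s w"
    hence hs: "has_inf_seq s" by (auto simp: has_inf_seq_def)
    from sd hs have "has_inf_seq (\<lambda>n. sup c (s n))" "inf_seq (\<lambda>n. sup c (s n)) = sup c (inf_seq s)"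
      unfolding sigma_distributive_def by blast+
    thus "is_inf_seq (\<lambda>n. sup c (s n)) (sup c w)"
      using has_inf_seqD is_inf_seq_unique[OF h] by metis
  qed
  show ?thesis unfolding is_inf_seq_def
  proof (intro conjI allI impI)
    fix n show "sup x y \<le> sup (a n) (b n)" using ia ib unfolding is_inf_seq_def
      by (meson sup_mono)
  next
    fix z assume z: "\<forall>n. z \<le> sup (a n) (b n)"
    have "\<forall>m. z \<le> sup x (b m)"
    proof
      fix m
      have "\<forall>n. z \<le> sup (b m) (a n)"
      proof
        fix n
        have "z \<le> sup (a (max n m)) (b (max n m))" using z by blast
        also have "\<dots> \<le> sup (a n) (b m)" using am
          by (intro sup_mono) (auto simp: antimono_def)
        finally show "z \<le> sup (b m) (a n)" by (simp add: sup_commute)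
      qed
      hence "z \<le> sup (b m) x" using d1[OF ia, of "b m"] unfolding is_inf_seq_def by blast
      thus "z \<le> sup x (b m)" by (simp add: sup_commute)
    qed
    thus "z \<le> sup x y" using d1[OF ib, of x] unfolding is_inf_seq_def by blast
  qed
qed

lemma is_sup_inf:
  fixes a b :: "nat \<Rightarrow> 'v::lattice"
  assumes sd: "sigma_distributive TYPE('v)" and am: "mono a" "mono b"
    and ia: "is_sup_seq a x" and ib: "is_sup_seq b y"
  shows "is_sup_seq (\<lambda>n. inf (a n) (b n)) (inf x y)"
proof -
  have d1: "\<And>c (s::nat\<Rightarrow>'v) w. is_sup_seq s w \<Longrightarrow> is_sup_seq (\<lambda>n. inf c (s n)) (inf c w)"
  proof -
    fix c and s :: "nat \<Rightarrow> 'v" and w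
    assume h: "is_sup_seq s w"
    hence hs: "has_sup_seq s" by (auto simp: has_sup_seq_def)
    from sd hs have "has_sup_seq (\<lambda>n. inf c (s n))" "sup_seq (\<lambda>n. inf c (s n)) = inf c (sup_seq s)"
      unfolding sigma_distributive_def by blast+
    thus "is_sup_seq (\<lambda>n. inf c (s n)) (inf c w)"
      using has_sup_seqD is_sup_seq_unique[OF h] by metis
  qed
  show ?thesis unfolding is_sup_seq_def
  proof (intro conjI allI impI)
    fix n show "inf (a n) (b n) \<le> inf x y" using ia ib unfolding is_sup_seq_def
      by (meson inf_mono)
  next
    fix z assume z: "\<forall>n. inf (a n) (b n) \<le> z"
    have "\<forall>m. inf x (b m) \<le> z"
    proof
      fix m
      have "\<forall>n. inf (b m) (a n) \<le> z"
      proof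
        fix n
        have "inf (b m) (a n) \<le> inf (a (max n m)) (b (max n m))" using am
          by (auto simp: mono_def intro: le_infI1 le_infI2)
        also have "\<dots> \<le> z" using z by blast
        finally show "inf (b m) (a n) \<le> z" .
      qed
      hence "inf (b m) x \<le> z" using d1[OF ia, of "b m"] unfolding is_sup_seq_def by blast
      thus "inf x (b m) \<le> z" by (simp add: inf_commute)
    qed
    thus "inf x y \<le> z" using d1[OF ib, of x] unfolding is_sup_seq_def by blast
  qed
qed

lemma is_inf_add:
  fixes x y :: "nat \<Rightarrow> 'e::ordered_ab_group_add"
  assumes am: "antimono x" "antimono y" and ix: "is_inf_seq x p" and iy: "is_inf_seq y q"
  shows "is_inf_seq (\<lambda>n. x n + y n) (p + q)"
  unfolding is_inf_seq_def
proof (intro conjI allI impI)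
  fix n show "p + q \<le> x n + y n" using ix iy by (auto simp: is_inf_seq_def intro: add_mono)
next
  fix z assume z: "\<forall>n. z \<le> x n + y n"
  have "\<forall>m. z - p \<le> y m"
  proof
    fix m
    have "\<forall>n. z - y m \<le> x n"
    proof
      fix n
      have "z \<le> x (max n m) + y (max n m)" using z by blast
      also have "\<dots> \<le> x n + y m" using am by (intro add_mono) (auto simp: antimono_def)
      finally show "z - y m \<le> x n" by (simp add: diff_le_eq)
    qed
    hence "z - y m \<le> p" using ix unfolding is_inf_seq_def by blast
    thus "z - p \<le> y m" by (simp add: diff_le_eq le_diff_eq add.commute)
  qed
  hence "z - p \<le> q" using iy unfolding is_inf_seq_def by blast
  thus "z \<le> p + q" by (simp add: diff_le_eq add.commute)
qed

lemma is_sup_add: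
  fixes x y :: "nat \<Rightarrow> 'e::ordered_ab_group_add"
  assumes am: "mono x" "mono y" and ix: "is_sup_seq x p" and iy: "is_sup_seq y q"
  shows "is_sup_seq (\<lambda>n. x n + y n) (p + q)"
  unfolding is_sup_seq_def
proof (intro conjI allI impI)
  fix n show "x n + y n \<le> p + q" using ix iy by (auto simp: is_sup_seq_def intro: add_mono)
next
  fix z assume z: "\<forall>n. x n + y n \<le> z"
  have "\<forall>m. y m \<le> z - p"
  proof
    fix m
    have "\<forall>n. x n \<le> z - y m"
    proof
      fix n
      have "x n + y m \<le> x (max n m) + y (max n m)" using am by (intro add_mono) (auto simp: mono_def)
      also have "\<dots> \<le> z" using z by blast
      finally show "x n \<le> z - y m" by (simp add: le_diff_eq)
    qed
    hence "p \<le> z - y m" using ix unfolding is_sup_seq_def by blast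
    thus "y m \<le> z - p" by (simp add: diff_le_eq le_diff_eq add.commute)
  qed
  hence "q \<le> z - p" using iy unfolding is_sup_seq_def by blast
  thus "p + q \<le> z" by (simp add: le_diff_eq add.commute)
qed

lemma conv_dec_mono: "conv_dec S f a \<Longrightarrow> S \<subseteq> S' \<Longrightarrow> (\<forall>x\<in>S. f x = g x) \<Longrightarrow> conv_dec S' g a"
  unfolding conv_dec_def by auto

lemma conv_inc_mono: "conv_inc S f a \<Longrightarrow> S \<subseteq> S' \<Longrightarrow> (\<forall>x\<in>S. f x = g x) \<Longrightarrow> conv_inc S' g a"
  unfolding conv_inc_def by auto

lemma PiL_mono: "S \<subseteq> S' \<Longrightarrow> (\<forall>x\<in>S. f x = g x) \<Longrightarrow> PiL S f \<subseteq> PiL S' g"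
  unfolding PiL_def using conv_dec_mono by blast

lemma SigmaL_mono: "S \<subseteq> S' \<Longrightarrow> (\<forall>x\<in>S. f x = g x) \<Longrightarrow> SigmaL S f \<subseteq> SigmaL S' g"
  unfolding SigmaL_def using conv_inc_mono by blast

lemma PiL_cong: "(\<forall>x\<in>S. f x = g x) \<Longrightarrow> PiL S f = PiL S g"
  using PiL_mono[of S S f g] PiL_mono[of S S g f] by auto

lemma SigmaL_cong: "(\<forall>x\<in>S. f x = g x) \<Longrightarrow> SigmaL S f = SigmaL S g"
  using SigmaL_mono[of S S f g] SigmaL_mono[of S S g f] by auto

lemma subset_PiL: "S \<subseteq> PiL S f"
proof
  fix x assume "x \<in> S"
  hence "conv_dec S f (\<lambda>n. x)" unfolding conv_dec_def has_inf_seq_def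
    using is_inf_const[of x] is_inf_const[of "f x"] by (auto simp: antimono_def)
  moreover have "inf_seq (\<lambda>n. x) = x" using is_inf_const is_inf_seq_unique by metis
  ultimately show "x \<in> PiL S f" unfolding PiL_def by force
qed

lemma subset_SigmaL: "S \<subseteq> SigmaL S f"
proof
  fix x assume "x \<in> S"
  hence "conv_inc S f (\<lambda>n. x)" unfolding conv_inc_def has_sup_seq_def
    using is_sup_const[of x] is_sup_const[of "f x"] by (auto simp: mono_def)
  moreover have "sup_seq (\<lambda>n. x) = x" using is_sup_const is_sup_seq_unique by metis
  ultimately show "x \<in> SigmaL S f" unfolding SigmaL_def by force
qed

lemma valuation_subset: "valuation C \<psi> \<Longrightarrow> B \<subseteq> C \<Longrightarrow> valuation B \<psi>"
  unfolding valuation_def by blast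

lemma PiL_in_C:
  assumes "Pi_complete C \<psi>" "S \<subseteq> C" "\<forall>x\<in>S. f x = \<psi> x"
  shows "PiL S f \<subseteq> C"
  using assms conv_dec_mono[of S f _ C \<psi>] unfolding Pi_complete_def PiL_def by blast

lemma SigmaL_in_C:
  assumes "Sigma_complete C \<psi>" "S \<subseteq> C" "\<forall>x\<in>S. f x = \<psi> x"
  shows "SigmaL S f \<subseteq> C"
  using assms conv_inc_mono[of S f _ C \<psi>] unfolding Sigma_complete_def SigmaL_def by blast

lemma Pi_ext_psi:
  assumes "Pi_complete C \<psi>" "valuation C \<psi>" "S \<subseteq> C" "\<forall>x\<in>S. f x = \<psi> x"
  shows "is_Pi_ext S f \<psi>"
  unfolding is_Pi_ext_def
proof
  show "valuation (PiL S f) \<psi>" using valuation_subset PiL_in_C assms by metis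
  show "\<forall>a. conv_dec S f a \<longrightarrow> \<psi> (inf_seq a) = inf_seq (\<lambda>n. f (a n))"
  proof (intro allI impI)
    fix a assume a: "conv_dec S f a"
    hence "conv_dec C \<psi> a" using conv_dec_mono assms by blast
    hence "\<psi> (inf_seq a) = inf_seq (\<lambda>n. \<psi> (a n))" using assms(1) unfolding Pi_complete_def by blast
    moreover have "\<forall>n. f (a n) = \<psi> (a n)" using a assms(4) unfolding conv_dec_def by auto
    ultimately show "\<psi> (inf_seq a) = inf_seq (\<lambda>n. f (a n))" by simp
  qed
qed

lemma Sigma_ext_psi:
  assumes "Sigma_complete C \<psi>" "valuation C \<psi>" "S \<subseteq> C" "\<forall>x\<in>S. f x = \<psi> x"
  shows "is_Sigma_ext S f \<psi>"
  unfolding is_Sigma_ext_def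
proof
  show "valuation (SigmaL S f) \<psi>" using valuation_subset SigmaL_in_C assms by metis
  show "\<forall>a. conv_inc S f a \<longrightarrow> \<psi> (sup_seq a) = sup_seq (\<lambda>n. f (a n))"
  proof (intro allI impI)
    fix a assume a: "conv_inc S f a"
    hence "conv_inc C \<psi> a" using conv_inc_mono assms by blast
    hence "\<psi> (sup_seq a) = sup_seq (\<lambda>n. \<psi> (a n))" using assms(1) unfolding Sigma_complete_def by blast
    moreover have "\<forall>n. f (a n) = \<psi> (a n)" using a assms(4) unfolding conv_inc_def by auto
    ultimately show "\<psi> (sup_seq a) = sup_seq (\<lambda>n. f (a n))" by simp
  qed
qed

lemma Pi_fun_eq:
  assumes "Pi_complete C \<psi>" "valuation C \<psi>" "S \<subseteq> C" "\<forall>x\<in>S. f x = \<psi> x"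
  shows "Pi_extendible S f" "\<forall>c\<in>PiL S f. Pi_fun S f c = \<psi> c"
proof -
  have e: "is_Pi_ext S f \<psi>" using Pi_ext_psi assms by blast
  thus "Pi_extendible S f" unfolding Pi_extendible_def by blast
  hence g: "is_Pi_ext S f (Pi_fun S f)" unfolding Pi_fun_def Pi_extendible_def using someI_ex by metis
  show "\<forall>c\<in>PiL S f. Pi_fun S f c = \<psi> c"
  proof
    fix c assume "c \<in> PiL S f"
    then obtain a where "conv_dec S f a" "c = inf_seq a" unfolding PiL_def by blast
    thus "Pi_fun S f c = \<psi> c" using e g unfolding is_Pi_ext_def by metis
  qed
qed

lemma Sigma_fun_eq:
  assumes "Sigma_complete C \<psi>" "valuation C \<psi>" "S \<subseteq> C" "\<forall>x\<in>S. f x = \<psi> x"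
  shows "Sigma_extendible S f" "\<forall>c\<in>SigmaL S f. Sigma_fun S f c = \<psi> c"
proof -
  have e: "is_Sigma_ext S f \<psi>" using Sigma_ext_psi assms by blast
  thus "Sigma_extendible S f" unfolding Sigma_extendible_def by blast
  hence g: "is_Sigma_ext S f (Sigma_fun S f)" unfolding Sigma_fun_def Sigma_extendible_def using someI_ex by metis
  show "\<forall>c\<in>SigmaL S f. Sigma_fun S f c = \<psi> c"
  proof
    fix c assume "c \<in> SigmaL S f"
    then obtain a where "conv_inc S f a" "c = sup_seq a" unfolding SigmaL_def by blast
    thus "Sigma_fun S f c = \<psi> c" using e g unfolding is_Sigma_ext_def by metis
  qed
qed

lemma PiL_sublattice:
  fixes S C :: "'v::lattice set" and \<psi> :: "'v \<Rightarrow> 'e::ordered_ab_group_add"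
  assumes sd: "sigma_distributive TYPE('v)" and rc: "R_complete TYPE('e)"
    and val: "valuation C \<psi>" and SC: "S \<subseteq> C" and sl: "sublattice S"
  shows "sublattice (PiL S \<psi>)"
  unfolding sublattice_def
proof (intro ballI conjI)
  fix c d assume "c \<in> PiL S \<psi>" "d \<in> PiL S \<psi>"
  then obtain a b where a: "conv_dec S \<psi> a" "c = inf_seq a" and b: "conv_dec S \<psi> b" "d = inf_seq b"
    unfolding PiL_def by blast
  define u where "u = (\<lambda>n. inf (a n) (b n))"
  define w where "w = (\<lambda>n. sup (a n) (b n))"
  have ia: "is_inf_seq a c" and ib: "is_inf_seq b d" using a b has_inf_seqD unfolding conv_dec_def by blast+
  have ama: "antimono a" and amb: "antimono b" using a b unfolding conv_dec_def by auto
  have aC: "\<And>n. a n \<in> C" and bC: "\<And>n. b n \<in> C" using a b SC unfolding conv_dec_def by auto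
  have uS: "\<And>n. u n \<in> S" and wS: "\<And>n. w n \<in> S" using a b sl unfolding conv_dec_def sublattice_def u_def w_def by auto
  have amu: "antimono u" and amw: "antimono w" using ama amb unfolding u_def w_def antimono_def
    by (meson inf_mono sup_mono)+
  have iu: "is_inf_seq u (inf c d)" unfolding u_def using is_inf_inf[OF ia ib] .
  have iw: "is_inf_seq w (sup c d)" unfolding w_def using is_inf_sup[OF sd ama amb ia ib] .
  have mono\<psi>: "\<And>x y. x \<in> C \<Longrightarrow> y \<in> C \<Longrightarrow> x \<le> y \<Longrightarrow> \<psi> x \<le> \<psi> y" using val unfolding valuation_def by blast
  have "\<And>n. u n \<in> C" "\<And>n. w n \<in> C" using uS wS SC by auto
  hence am\<psi>u: "antimono (\<lambda>n. \<psi> (u n))" and am\<psi>w: "antimono (\<lambda>n. \<psi> (w n))"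
    using amu amw mono\<psi> unfolding antimono_def by auto
  have am\<psi>a: "antimono (\<lambda>n. \<psi> (a n))" and am\<psi>b: "antimono (\<lambda>n. \<psi> (b n))"
    using ama amb mono\<psi> aC bC unfolding antimono_def by auto
  have "is_inf_seq (\<lambda>n. \<psi> (a n) + \<psi> (b n)) (inf_seq (\<lambda>n. \<psi> (a n)) + inf_seq (\<lambda>n. \<psi> (b n)))"
    using is_inf_add[OF am\<psi>a am\<psi>b] a b has_inf_seqD unfolding conv_dec_def by blast
  moreover have "(\<lambda>n. \<psi> (a n) + \<psi> (b n)) = (\<lambda>n. \<psi> (u n) + \<psi> (w n))"
    using val aC bC unfolding valuation_def u_def w_def by auto
  ultimately have "has_inf_seq (\<lambda>n. \<psi> (u n) + \<psi> (w n))" unfolding has_inf_seq_def by auto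
  hence "has_inf_seq (\<lambda>n. \<psi> (u n)) \<and> has_inf_seq (\<lambda>n. \<psi> (w n))"
    using rc am\<psi>u am\<psi>w unfolding R_complete_def by blast
  hence cu: "conv_dec S \<psi> u" and cw: "conv_dec S \<psi> w"
    unfolding conv_dec_def has_inf_seq_def using uS wS amu amw iu iw by blast+
  show "inf c d \<in> PiL S \<psi>" using cu is_inf_seq_unique[OF iu] unfolding PiL_def by force
  show "sup c d \<in> PiL S \<psi>" using cw is_inf_seq_unique[OF iw] unfolding PiL_def by force
qed

lemma SigmaL_sublattice:
  fixes S C :: "'v::lattice set" and \<psi> :: "'v \<Rightarrow> 'e::ordered_ab_group_add"
  assumes sd: "sigma_distributive TYPE('v)" and rc: "R_complete TYPE('e)"
    and val: "valuation C \<psi>" and SC: "S \<subseteq> C" and sl: "sublattice S"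
  shows "sublattice (SigmaL S \<psi>)"
  unfolding sublattice_def
proof (intro ballI conjI)
  fix c d assume "c \<in> SigmaL S \<psi>" "d \<in> SigmaL S \<psi>"
  then obtain a b where a: "conv_inc S \<psi> a" "c = sup_seq a" and b: "conv_inc S \<psi> b" "d = sup_seq b"
    unfolding SigmaL_def by blast
  define u where "u = (\<lambda>n. inf (a n) (b n))"
  define w where "w = (\<lambda>n. sup (a n) (b n))"
  have ia: "is_sup_seq a c" and ib: "is_sup_seq b d" using a b has_sup_seqD unfolding conv_inc_def by blast+
  have ama: "mono a" and amb: "mono b" using a b unfolding conv_inc_def by auto
  have aC: "\<And>n. a n \<in> C" and bC: "\<And>n. b n \<in> C" using a b SC unfolding conv_inc_def by auto
  have uS: "\<And>n. u n \<in> S" and wS: "\<And>n. w n \<in> S" using a b sl unfolding conv_inc_def sublattice_def u_def w_def by auto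
  have amu: "mono u" and amw: "mono w" using ama amb unfolding u_def w_def mono_def
    by (meson inf_mono sup_mono)+
  have iu: "is_sup_seq u (inf c d)" unfolding u_def using is_sup_inf[OF sd ama amb ia ib] .
  have iw: "is_sup_seq w (sup c d)" unfolding w_def using is_sup_sup[OF ia ib] .
  have mono\<psi>: "\<And>x y. x \<in> C \<Longrightarrow> y \<in> C \<Longrightarrow> x \<le> y \<Longrightarrow> \<psi> x \<le> \<psi> y" using val unfolding valuation_def by blast
  have "\<And>n. u n \<in> C" "\<And>n. w n \<in> C" using uS wS SC by auto
  hence am\<psi>u: "mono (\<lambda>n. \<psi> (u n))" and am\<psi>w: "mono (\<lambda>n. \<psi> (w n))"
    using amu amw mono\<psi> unfolding mono_def by auto
  have am\<psi>a: "mono (\<lambda>n. \<psi> (a n))" and am\<psi>b: "mono (\<lambda>n. \<psi> (b n))"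
    using ama amb mono\<psi> aC bC unfolding mono_def by auto
  have "is_sup_seq (\<lambda>n. \<psi> (a n) + \<psi> (b n)) (sup_seq (\<lambda>n. \<psi> (a n)) + sup_seq (\<lambda>n. \<psi> (b n)))"
    using is_sup_add[OF am\<psi>a am\<psi>b] a b has_sup_seqD unfolding conv_inc_def by blast
  moreover have "(\<lambda>n. \<psi> (a n) + \<psi> (b n)) = (\<lambda>n. \<psi> (u n) + \<psi> (w n))"
    using val aC bC unfolding valuation_def u_def w_def by auto
  ultimately have "has_sup_seq (\<lambda>n. \<psi> (u n) + \<psi> (w n))" unfolding has_sup_seq_def by auto
  hence "has_sup_seq (\<lambda>n. \<psi> (u n)) \<and> has_sup_seq (\<lambda>n. \<psi> (w n))"
    using rc am\<psi>u am\<psi>w unfolding R_complete_def by blast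
  hence cu: "conv_inc S \<psi> u" and cw: "conv_inc S \<psi> w"
    unfolding conv_inc_def has_sup_seq_def using uS wS amu amw iu iw by blast+
  show "inf c d \<in> SigmaL S \<psi>" using cu is_sup_seq_unique[OF iu] unfolding SigmaL_def by force
  show "sup c d \<in> SigmaL S \<psi>" using cw is_sup_seq_unique[OF iw] unfolding SigmaL_def by force
qed

lemma WO_wf: "Well_order r \<Longrightarrow> wf (r - Id)"
  by (simp add: well_order_on_def)

lemma underS_iff: "j \<in> underS r i \<longleftrightarrow> (j, i) \<in> r - Id"
  unfolding underS_def by auto

lemma underS_Field: "j \<in> underS r i \<Longrightarrow> j \<in> Field r \<and> i \<in> Field r"
  unfolding underS_def Field_def by auto

lemma WO_props: "Well_order r \<Longrightarrow> trans r \<and> antisym r \<and> total_on (Field r) r"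
  by (simp add: well_order_on_def linear_order_on_def partial_order_on_def preorder_on_def)

lemma WO_trans: "Well_order r \<Longrightarrow> k \<in> underS r j \<Longrightarrow> j \<in> underS r i \<Longrightarrow> k \<in> underS r i"
proof -
  assume wo: "Well_order r" and a: "k \<in> underS r j" and b: "j \<in> underS r i"
  have tr: "trans r" and an: "antisym r" using WO_props[OF wo] by auto
  have kj: "(k, j) \<in> r" "k \<noteq> j" and ji: "(j, i) \<in> r" "j \<noteq> i" using a b unfolding underS_def by auto
  have ki: "(k, i) \<in> r" using tr kj ji by (meson transD)
  have "k \<noteq> i"
  proof
    assume "k = i"
    hence "(i, j) \<in> r" using kj by simp
    hence "i = j" using ji an by (meson antisymD)
    thus False using ji by simp
  qed
  thus ?thesis using ki unfolding underS_def by auto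
qed

lemma WO_not_both: "Well_order r \<Longrightarrow> k \<in> underS r j \<Longrightarrow> j \<in> underS r k \<Longrightarrow> False"
proof -
  assume wo: "Well_order r" and a: "k \<in> underS r j" and b: "j \<in> underS r k"
  have an: "antisym r" using WO_props[OF wo] by auto
  have "(k, j) \<in> r" "(j, k) \<in> r" "k \<noteq> j" using a b unfolding underS_def by auto
  thus False using an by (meson antisymD)
qed

lemma WO_irrefl: "j \<notin> underS r j"
  unfolding underS_def by auto

lemma WO_total: "Well_order r \<Longrightarrow> j \<in> Field r \<Longrightarrow> k \<in> Field r \<Longrightarrow> j = k \<or> j \<in> underS r k \<or> k \<in> underS r j"
  using WO_props[of r] unfolding underS_def total_on_def by blast

lemma limit_above:
  assumes wo: "Well_order r" and nsucc: "\<not> (\<exists>j\<in>underS r i. underS r i = insert j (underS r j))"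
    and k: "k \<in> underS r i"
  shows "\<exists>m\<in>underS r i. k \<in> underS r m"
proof (rule ccontr)
  assume nm: "\<not> ?thesis"
  have "underS r i = insert k (underS r k)"
  proof
    show "insert k (underS r k) \<subseteq> underS r i" using k WO_trans[OF wo] by blast
    show "underS r i \<subseteq> insert k (underS r k)"
    proof
      fix m assume m: "m \<in> underS r i"
      have "m \<in> Field r" using m underS_Field by metis
      have "k \<in> Field r" using k underS_Field by metis
      have "m = k \<or> m \<in> underS r k \<or> k \<in> underS r m" using WO_total[OF wo] \<open>m \<in> Field r\<close> \<open>k \<in> Field r\<close> by blast
      moreover have "k \<notin> underS r m" using nm m by blast
      ultimately show "m \<in> insert k (underS r k)" by blast
    qed
  qed
  thus False using nsucc k by blast
qed

lemma pred_unique: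
  assumes wo: "Well_order r" and "j \<in> underS r i" "underS r i = insert j (underS r j)"
    and "j' \<in> underS r i" "underS r i = insert j' (underS r j')"
  shows "j' = j"
proof (rule ccontr)
  assume ne: "j' \<noteq> j"
  have "j' \<in> underS r j" using assms(4) assms(3) ne by (metis insert_iff)
  moreover have "j \<in> underS r j'" using assms(2) assms(5) ne by (metis insert_iff)
  ultimately show False using WO_not_both[OF wo] by blast
qed

lemma hier_eq: "Well_order r \<Longrightarrow>
   hier r L \<phi> i = hier_step r L \<phi> (cut (hier r L \<phi>) (r - Id) i) i"
  unfolding hier_def using wfrec WO_wf by metis

lemma cut_underS: "j \<in> underS r i \<Longrightarrow> cut f (r - Id) i j = f j"
  by (simp add: cut_apply underS_iff)

lemma hier_zero: "Well_order r \<Longrightarrow> underS r i = {} \<Longrightarrow>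
   hier r L \<phi> i = \<lparr>PL = L, Pf = \<phi>, Pok = True, SL = L, Sf = \<phi>, Sok = True\<rparr>"
  by (subst hier_eq) (auto simp: hier_step_def)

lemma hier_succ:
  assumes wo: "Well_order r" and j: "j \<in> underS r i" "underS r i = insert j (underS r j)"
  shows "hier r L \<phi> i =
        \<lparr>PL = PiL (SL (hier r L \<phi> j)) (Sf (hier r L \<phi> j)), Pf = Pi_fun (SL (hier r L \<phi> j)) (Sf (hier r L \<phi> j)),
         Pok = (Sok (hier r L \<phi> j) \<and> Pi_extendible (SL (hier r L \<phi> j)) (Sf (hier r L \<phi> j))),
         SL = SigmaL (PL (hier r L \<phi> j)) (Pf (hier r L \<phi> j)), Sf = Sigma_fun (PL (hier r L \<phi> j)) (Pf (hier r L \<phi> j)),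
         Sok = (Pok (hier r L \<phi> j) \<and> Sigma_extendible (PL (hier r L \<phi> j)) (Pf (hier r L \<phi> j)))\<rparr>"
  (is "_ = ?rhs")
proof -
  define j' where "j' = (SOME j. j \<in> underS r i \<and> underS r i = insert j (underS r j))"
  have "j' \<in> underS r i \<and> underS r i = insert j' (underS r j')"
    unfolding j'_def by (rule someI_ex) (use j in blast)
  hence jj: "j' = j" using pred_unique[OF wo j] by blast
  have ne: "underS r i \<noteq> {}" using j by auto
  have ex: "\<exists>j\<in>underS r i. underS r i = insert j (underS r j)" using j by blast
  define F where "F = cut (hier r L \<phi>) (r - Id) i"
  have Fj: "F j = hier r L \<phi> j" unfolding F_def by (rule cut_underS[OF j(1)])
  have "hier r L \<phi> i = hier_step r L \<phi> F i" unfolding F_def by (rule hier_eq[OF wo])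
  also have "\<dots> = (let j = j'; s = F j in
        \<lparr>PL = PiL (SL s) (Sf s), Pf = Pi_fun (SL s) (Sf s),
         Pok = (Sok s \<and> Pi_extendible (SL s) (Sf s)),
         SL = SigmaL (PL s) (Pf s), Sf = Sigma_fun (PL s) (Pf s),
         Sok = (Pok s \<and> Sigma_extendible (PL s) (Pf s))\<rparr>)"
    unfolding hier_step_def j'_def by (simp only: if_not_P[OF ne] if_P[OF ex])
  also have "\<dots> = ?rhs" unfolding Let_def jj Fj ..
  finally show ?thesis .
qed

lemma hier_lim:
  assumes wo: "Well_order r" and ne: "underS r i \<noteq> {}"
    and nsucc: "\<not> (\<exists>j\<in>underS r i. underS r i = insert j (underS r j))"
  shows "PL (hier r L \<phi> i) = (\<Union>j\<in>underS r i. PL (hier r L \<phi> j))"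
    "SL (hier r L \<phi> i) = (\<Union>j\<in>underS r i. SL (hier r L \<phi> j))"
    "Pok (hier r L \<phi> i) = (\<forall>j\<in>underS r i. Pok (hier r L \<phi> j))"
    "Sok (hier r L \<phi> i) = (\<forall>j\<in>underS r i. Sok (hier r L \<phi> j))"
    "\<forall>c\<in>PL (hier r L \<phi> i). \<exists>j\<in>underS r i. c \<in> PL (hier r L \<phi> j) \<and> Pf (hier r L \<phi> i) c = Pf (hier r L \<phi> j) c"
    "\<forall>c\<in>SL (hier r L \<phi> i). \<exists>j\<in>underS r i. c \<in> SL (hier r L \<phi> j) \<and> Sf (hier r L \<phi> i) c = Sf (hier r L \<phi> j) c"
proof -
  define F where "F = cut (hier r L \<phi>) (r - Id) i"
  have FH: "\<And>j. j \<in> underS r i \<Longrightarrow> F j = hier r L \<phi> j" unfolding F_def by (rule cut_underS)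
  have eq: "hier r L \<phi> i =
       \<lparr>PL = (\<Union>j\<in>underS r i. PL (F j)),
        Pf = (\<lambda>c. Pf (F (SOME j. j \<in> underS r i \<and> c \<in> PL (F j))) c),
        Pok = (\<forall>j\<in>underS r i. Pok (F j)),
        SL = (\<Union>j\<in>underS r i. SL (F j)),
        Sf = (\<lambda>c. Sf (F (SOME j. j \<in> underS r i \<and> c \<in> SL (F j))) c),
        Sok = (\<forall>j\<in>underS r i. Sok (F j))\<rparr>"
    unfolding F_def hier_eq[OF wo, of L \<phi> i] hier_step_def by (simp only: if_not_P[OF ne] if_not_P[OF nsucc])
  show "PL (hier r L \<phi> i) = (\<Union>j\<in>underS r i. PL (hier r L \<phi> j))" using eq FH by simp
  show "SL (hier r L \<phi> i) = (\<Union>j\<in>underS r i. SL (hier r L \<phi> j))" using eq FH by simp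
  show "Pok (hier r L \<phi> i) = (\<forall>j\<in>underS r i. Pok (hier r L \<phi> j))" using eq FH by simp
  show "Sok (hier r L \<phi> i) = (\<forall>j\<in>underS r i. Sok (hier r L \<phi> j))" using eq FH by simp
  show "\<forall>c\<in>PL (hier r L \<phi> i). \<exists>j\<in>underS r i. c \<in> PL (hier r L \<phi> j) \<and> Pf (hier r L \<phi> i) c = Pf (hier r L \<phi> j) c"
  proof
    fix c assume "c \<in> PL (hier r L \<phi> i)"
    hence "\<exists>j. j \<in> underS r i \<and> c \<in> PL (F j)" using eq by force
    hence s: "(SOME j. j \<in> underS r i \<and> c \<in> PL (F j)) \<in> underS r i \<and> c \<in> PL (F (SOME j. j \<in> underS r i \<and> c \<in> PL (F j)))"
      by (rule someI_ex)
    thus "\<exists>j\<in>underS r i. c \<in> PL (hier r L \<phi> j) \<and> Pf (hier r L \<phi> i) c = Pf (hier r L \<phi> j) c"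
      using eq FH by (intro bexI[of _ "SOME j. j \<in> underS r i \<and> c \<in> PL (F j)"]) auto
  qed
  show "\<forall>c\<in>SL (hier r L \<phi> i). \<exists>j\<in>underS r i. c \<in> SL (hier r L \<phi> j) \<and> Sf (hier r L \<phi> i) c = Sf (hier r L \<phi> j) c"
  proof
    fix c assume "c \<in> SL (hier r L \<phi> i)"
    hence "\<exists>j. j \<in> underS r i \<and> c \<in> SL (F j)" using eq by force
    hence s: "(SOME j. j \<in> underS r i \<and> c \<in> SL (F j)) \<in> underS r i \<and> c \<in> SL (F (SOME j. j \<in> underS r i \<and> c \<in> SL (F j)))"
      by (rule someI_ex)
    thus "\<exists>j\<in>underS r i. c \<in> SL (hier r L \<phi> j) \<and> Sf (hier r L \<phi> i) c = Sf (hier r L \<phi> j) c"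
      using eq FH by (intro bexI[of _ "SOME j. j \<in> underS r i \<and> c \<in> SL (F j)"]) auto
  qed
qed

definition good :: "'v::lattice set \<Rightarrow> ('v \<Rightarrow> 'e::ordered_ab_group_add) \<Rightarrow> 'v set \<Rightarrow> 'i rel
   \<Rightarrow> ('i \<Rightarrow> ('v, 'e) stage) \<Rightarrow> 'i \<Rightarrow> bool" where
  "good C \<psi> L r H i \<longleftrightarrow> PL (H i) \<subseteq> C \<and> SL (H i) \<subseteq> C \<and> Pok (H i) \<and> Sok (H i) \<and>
     (\<forall>c\<in>PL (H i). Pf (H i) c = \<psi> c) \<and> (\<forall>c\<in>SL (H i). Sf (H i) c = \<psi> c) \<and>
     sublattice (PL (H i)) \<and> sublattice (SL (H i)) \<and> L \<subseteq> PL (H i) \<and> L \<subseteq> SL (H i) \<and>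
     PL (H i) \<subseteq> PiL (SL (H i)) \<psi> \<and> SL (H i) \<subseteq> SigmaL (PL (H i)) \<psi> \<and>
     (\<forall>k\<in>underS r i. PL (H k) \<subseteq> PL (H i) \<and> SL (H k) \<subseteq> SL (H i) \<and> PL (H k) \<subseteq> SL (H i) \<and>
        SL (H k) \<subseteq> PL (H i) \<and> PiL (SL (H k)) \<psi> \<subseteq> PL (H i) \<and> SigmaL (PL (H k)) \<psi> \<subseteq> SL (H i))"

lemma goodI:
  assumes "PL (H i) \<subseteq> C" "SL (H i) \<subseteq> C" "Pok (H i)" "Sok (H i)"
     "\<forall>c\<in>PL (H i). Pf (H i) c = \<psi> c" "\<forall>c\<in>SL (H i). Sf (H i) c = \<psi> c"
     "sublattice (PL (H i))" "sublattice (SL (H i))" "L \<subseteq> PL (H i)" "L \<subseteq> SL (H i)"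
     "PL (H i) \<subseteq> PiL (SL (H i)) \<psi>" "SL (H i) \<subseteq> SigmaL (PL (H i)) \<psi>"
     "\<forall>k\<in>underS r i. PL (H k) \<subseteq> PL (H i) \<and> SL (H k) \<subseteq> SL (H i) \<and> PL (H k) \<subseteq> SL (H i) \<and>
        SL (H k) \<subseteq> PL (H i) \<and> PiL (SL (H k)) \<psi> \<subseteq> PL (H i) \<and> SigmaL (PL (H k)) \<psi> \<subseteq> SL (H i)"
  shows "good C \<psi> L r H i"
  unfolding good_def using assms by (intro conjI)

lemma goodD:
  assumes "good C \<psi> L r H i"
  shows "PL (H i) \<subseteq> C" "SL (H i) \<subseteq> C" "Pok (H i)" "Sok (H i)"
     "\<forall>c\<in>PL (H i). Pf (H i) c = \<psi> c" "\<forall>c\<in>SL (H i). Sf (H i) c = \<psi> c"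
     "sublattice (PL (H i))" "sublattice (SL (H i))" "L \<subseteq> PL (H i)" "L \<subseteq> SL (H i)"
     "PL (H i) \<subseteq> PiL (SL (H i)) \<psi>" "SL (H i) \<subseteq> SigmaL (PL (H i)) \<psi>"
     "\<And>k. k \<in> underS r i \<Longrightarrow> PL (H k) \<subseteq> PL (H i)"
     "\<And>k. k \<in> underS r i \<Longrightarrow> SL (H k) \<subseteq> SL (H i)"
     "\<And>k. k \<in> underS r i \<Longrightarrow> PL (H k) \<subseteq> SL (H i)"
     "\<And>k. k \<in> underS r i \<Longrightarrow> SL (H k) \<subseteq> PL (H i)"
     "\<And>k. k \<in> underS r i \<Longrightarrow> PiL (SL (H k)) \<psi> \<subseteq> PL (H i)"
     "\<And>k. k \<in> underS r i \<Longrightarrow> SigmaL (PL (H k)) \<psi> \<subseteq> SL (H i)"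
  using assms unfolding good_def by auto

lemma good_all:
  fixes L C :: "'v::lattice set" and \<phi> \<psi> :: "'v \<Rightarrow> 'e::ordered_ab_group_add" and r :: "'i rel"
  assumes wo: "Well_order r" and sd: "sigma_distributive TYPE('v)" and rc: "R_complete TYPE('e)"
    and slL: "sublattice L" and val: "valuation C \<psi>" and ext: "extends C \<psi> L \<phi>"
    and cpl: "complete C \<psi>"
  shows "good C \<psi> L r (hier r L \<phi>) i"
proof (induction i rule: wf_induct_rule[OF WO_wf[OF wo]])
  case (1 i)
  let ?H = "hier r L \<phi>"
  have IH: "\<And>j. j \<in> underS r i \<Longrightarrow> good C \<psi> L r ?H j" using 1 underS_iff by metis
  have pc: "Pi_complete C \<psi>" and sc: "Sigma_complete C \<psi>" using cpl unfolding complete_def by auto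
  have LC: "L \<subseteq> C" and L\<psi>: "\<forall>a\<in>L. \<psi> a = \<phi> a" using ext unfolding extends_def by auto
  show ?case
  proof (cases "underS r i = {}")
    case True
    have h: "?H i = \<lparr>PL = L, Pf = \<phi>, Pok = True, SL = L, Sf = \<phi>, Sok = True\<rparr>" by (rule hier_zero[OF wo True])
    have "L \<subseteq> PiL L \<psi>" "L \<subseteq> SigmaL L \<psi>" by (rule subset_PiL, rule subset_SigmaL)
    thus ?thesis using LC L\<psi> slL True by (intro goodI) (simp_all add: h)
  next
    case ne: False
    show ?thesis
    proof (cases "\<exists>j\<in>underS r i. underS r i = insert j (underS r j)")
      case True
      then obtain j where j: "j \<in> underS r i" "underS r i = insert j (underS r j)" by blast
      have h: "?H i = \<lparr>PL = PiL (SL (?H j)) (Sf (?H j)), Pf = Pi_fun (SL (?H j)) (Sf (?H j)),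
         Pok = (Sok (?H j) \<and> Pi_extendible (SL (?H j)) (Sf (?H j))),
         SL = SigmaL (PL (?H j)) (Pf (?H j)), Sf = Sigma_fun (PL (?H j)) (Pf (?H j)),
         Sok = (Pok (?H j) \<and> Sigma_extendible (PL (?H j)) (Pf (?H j)))\<rparr>"
        by (rule hier_succ[OF wo j])
      have gj: "good C \<psi> L r ?H j" using IH j(1) .
      define P' where "P' = PL (?H j)"
      define S' where "S' = SL (?H j)"
      note gD = goodD[OF gj, folded P'_def S'_def]
      have P'C: "P' \<subseteq> C" and S'C: "S' \<subseteq> C" and okj: "Pok (?H j)" "Sok (?H j)"
        and fP: "\<forall>c\<in>P'. Pf (?H j) c = \<psi> c" and fS: "\<forall>c\<in>S'. Sf (?H j) c = \<psi> c"
        and slP: "sublattice P'" and slS: "sublattice S'" and LP: "L \<subseteq> P'" and LS: "L \<subseteq> S'"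
        and PPi: "P' \<subseteq> PiL S' \<psi>" and SSig: "S' \<subseteq> SigmaL P' \<psi>"
        using gD(1-12) by auto
      have PLi: "PL (?H i) = PiL S' \<psi>" unfolding h S'_def using PiL_cong fS S'_def by auto
      have SLi: "SL (?H i) = SigmaL P' \<psi>" unfolding h P'_def using SigmaL_cong fP P'_def by auto
      have pe: "Pi_extendible S' (Sf (?H j))" "\<forall>c\<in>PiL S' (Sf (?H j)). Pi_fun S' (Sf (?H j)) c = \<psi> c"
        using Pi_fun_eq[OF pc val S'C fS] by auto
      have se: "Sigma_extendible P' (Pf (?H j))" "\<forall>c\<in>SigmaL P' (Pf (?H j)). Sigma_fun P' (Pf (?H j)) c = \<psi> c"
        using Sigma_fun_eq[OF sc val P'C fP] by auto
      have a1: "PL (?H i) \<subseteq> C" unfolding PLi using PiL_in_C[OF pc S'C] by auto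
      have a2: "SL (?H i) \<subseteq> C" unfolding SLi using SigmaL_in_C[OF sc P'C] by auto
      have b: "Pok (?H i)" "Sok (?H i)" unfolding h using okj pe se P'_def S'_def by auto
      have c1: "\<forall>c\<in>PL (?H i). Pf (?H i) c = \<psi> c" using pe unfolding h S'_def by simp
      have c2: "\<forall>c\<in>SL (?H i). Sf (?H i) c = \<psi> c" using se unfolding h P'_def by simp
      have d: "sublattice (PL (?H i))" "sublattice (SL (?H i))" unfolding PLi SLi
        using PiL_sublattice[OF sd rc val S'C slS] SigmaL_sublattice[OF sd rc val P'C slP] by auto
      have S'P: "S' \<subseteq> PiL S' \<psi>" and P'S: "P' \<subseteq> SigmaL P' \<psi>" by (rule subset_PiL, rule subset_SigmaL)
      have g: "L \<subseteq> PL (?H i)" "L \<subseteq> SL (?H i)" unfolding PLi SLi using LS S'P LP P'S by auto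
      have f: "PL (?H i) \<subseteq> PiL (SL (?H i)) \<psi>" "SL (?H i) \<subseteq> SigmaL (PL (?H i)) \<psi>"
        unfolding PLi SLi using PiL_mono[OF SSig, of \<psi> \<psi>] SigmaL_mono[OF PPi, of \<psi> \<psi>] by auto
      have e: "\<forall>k\<in>underS r i. PL (?H k) \<subseteq> PL (?H i) \<and> SL (?H k) \<subseteq> SL (?H i) \<and> PL (?H k) \<subseteq> SL (?H i) \<and>
              SL (?H k) \<subseteq> PL (?H i) \<and> PiL (SL (?H k)) \<psi> \<subseteq> PL (?H i) \<and> SigmaL (PL (?H k)) \<psi> \<subseteq> SL (?H i)"
      proof
        fix k assume k: "k \<in> underS r i"
        show "PL (?H k) \<subseteq> PL (?H i) \<and> SL (?H k) \<subseteq> SL (?H i) \<and> PL (?H k) \<subseteq> SL (?H i) \<and>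
              SL (?H k) \<subseteq> PL (?H i) \<and> PiL (SL (?H k)) \<psi> \<subseteq> PL (?H i) \<and> SigmaL (PL (?H k)) \<psi> \<subseteq> SL (?H i)"
        proof (cases "k = j")
          case True
          thus ?thesis unfolding PLi SLi using PPi SSig S'P P'S P'_def S'_def by simp
        next
          case False
          hence kj: "k \<in> underS r j" using k j(2) by (metis insert_iff)
          have "PL (?H k) \<subseteq> P'" "SL (?H k) \<subseteq> S'" "PL (?H k) \<subseteq> S'" "SL (?H k) \<subseteq> P'"
             "PiL (SL (?H k)) \<psi> \<subseteq> P'" "SigmaL (PL (?H k)) \<psi> \<subseteq> S'" using gD(13-18)[OF kj] by auto
          thus ?thesis unfolding PLi SLi using PPi SSig S'P P'S by (meson order_trans)
        qed
      qed
      show ?thesis using a1 a2 b c1 c2 d g f e by (rule goodI)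
    next
      case nsucc: False
      note hl = hier_lim[OF wo ne nsucc, of L \<phi>]
      have ab: "\<forall>k\<in>underS r i. \<exists>m\<in>underS r i. k \<in> underS r m" using limit_above[OF wo nsucc] by blast
      have a: "PL (?H i) \<subseteq> C" "SL (?H i) \<subseteq> C" unfolding hl(1,2) using goodD(1,2,3,4)[OF IH] by blast+
      have b: "Pok (?H i)" "Sok (?H i)" unfolding hl(3,4) using goodD(1,2,3,4)[OF IH] by blast+
      have c1: "\<forall>c\<in>PL (?H i). Pf (?H i) c = \<psi> c"
      proof
        fix c assume "c \<in> PL (?H i)"
        then obtain j where "j \<in> underS r i" "c \<in> PL (?H j)" "Pf (?H i) c = Pf (?H j) c" using hl(5) by blast
        thus "Pf (?H i) c = \<psi> c" using goodD(5)[OF IH] by metis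
      qed
      have c2: "\<forall>c\<in>SL (?H i). Sf (?H i) c = \<psi> c"
      proof
        fix c assume "c \<in> SL (?H i)"
        then obtain j where "j \<in> underS r i" "c \<in> SL (?H j)" "Sf (?H i) c = Sf (?H j) c" using hl(6) by blast
        thus "Sf (?H i) c = \<psi> c" using goodD(6)[OF IH] by metis
      qed
      have chain: "\<And>j1 j2. j1 \<in> underS r i \<Longrightarrow> j2 \<in> underS r i \<Longrightarrow>
          (PL (?H j1) \<subseteq> PL (?H j2) \<and> SL (?H j1) \<subseteq> SL (?H j2)) \<or> (PL (?H j2) \<subseteq> PL (?H j1) \<and> SL (?H j2) \<subseteq> SL (?H j1))"
      proof -
        fix j1 j2 assume j1: "j1 \<in> underS r i" and j2: "j2 \<in> underS r i"
        have "j1 \<in> Field r" using j1 underS_Field by metis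
        moreover have "j2 \<in> Field r" using j2 underS_Field by metis
        ultimately have "j1 = j2 \<or> j1 \<in> underS r j2 \<or> j2 \<in> underS r j1" using WO_total[OF wo] by blast
        thus "(PL (?H j1) \<subseteq> PL (?H j2) \<and> SL (?H j1) \<subseteq> SL (?H j2)) \<or> (PL (?H j2) \<subseteq> PL (?H j1) \<and> SL (?H j2) \<subseteq> SL (?H j1))"
          using goodD(13,14)[OF IH[OF j1]] goodD(13,14)[OF IH[OF j2]] by blast
      qed
      have d: "sublattice (PL (?H i))" "sublattice (SL (?H i))"
      proof -
        show "sublattice (PL (?H i))" unfolding sublattice_def
        proof (intro ballI)
          fix x y assume "x \<in> PL (?H i)" "y \<in> PL (?H i)"
          then obtain j1 j2 where j1: "j1 \<in> underS r i" "x \<in> PL (?H j1)" and j2: "j2 \<in> underS r i" "y \<in> PL (?H j2)"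
            unfolding hl(1) by blast
          have s1: "sublattice (PL (?H j1))" and s2: "sublattice (PL (?H j2))" using goodD(7,8)[OF IH[OF j1(1)]] goodD(7,8)[OF IH[OF j2(1)]] by blast+
          from chain[OF j1(1) j2(1)] show "inf x y \<in> PL (?H i) \<and> sup x y \<in> PL (?H i)"
          proof
            assume "PL (?H j1) \<subseteq> PL (?H j2) \<and> SL (?H j1) \<subseteq> SL (?H j2)"
            thus ?thesis using s2 j1 j2 unfolding hl(1) sublattice_def by blast
          next
            assume "PL (?H j2) \<subseteq> PL (?H j1) \<and> SL (?H j2) \<subseteq> SL (?H j1)"
            thus ?thesis using s1 j1 j2 unfolding hl(1) sublattice_def by blast
          qed
        qed
        show "sublattice (SL (?H i))" unfolding sublattice_def
        proof (intro ballI)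
          fix x y assume "x \<in> SL (?H i)" "y \<in> SL (?H i)"
          then obtain j1 j2 where j1: "j1 \<in> underS r i" "x \<in> SL (?H j1)" and j2: "j2 \<in> underS r i" "y \<in> SL (?H j2)"
            unfolding hl(2) by blast
          have s1: "sublattice (SL (?H j1))" and s2: "sublattice (SL (?H j2))" using goodD(7,8)[OF IH[OF j1(1)]] goodD(7,8)[OF IH[OF j2(1)]] by blast+
          from chain[OF j1(1) j2(1)] show "inf x y \<in> SL (?H i) \<and> sup x y \<in> SL (?H i)"
          proof
            assume "PL (?H j1) \<subseteq> PL (?H j2) \<and> SL (?H j1) \<subseteq> SL (?H j2)"
            thus ?thesis using s2 j1 j2 unfolding hl(2) sublattice_def by blast
          next
            assume "PL (?H j2) \<subseteq> PL (?H j1) \<and> SL (?H j2) \<subseteq> SL (?H j1)"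
            thus ?thesis using s1 j1 j2 unfolding hl(2) sublattice_def by blast
          qed
        qed
      qed
      have e: "\<forall>k\<in>underS r i. PL (?H k) \<subseteq> PL (?H i) \<and> SL (?H k) \<subseteq> SL (?H i) \<and> PL (?H k) \<subseteq> SL (?H i) \<and>
              SL (?H k) \<subseteq> PL (?H i) \<and> PiL (SL (?H k)) \<psi> \<subseteq> PL (?H i) \<and> SigmaL (PL (?H k)) \<psi> \<subseteq> SL (?H i)"
      proof
        fix k assume k: "k \<in> underS r i"
        then obtain m where m: "m \<in> underS r i" "k \<in> underS r m" using ab by blast
        have "PL (?H k) \<subseteq> SL (?H m) \<and> SL (?H k) \<subseteq> PL (?H m) \<and> PiL (SL (?H k)) \<psi> \<subseteq> PL (?H m) \<and> SigmaL (PL (?H k)) \<psi> \<subseteq> SL (?H m)"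
          using goodD(15-18)[OF IH[OF m(1)] m(2)] by blast
        moreover have "PL (?H m) \<subseteq> PL (?H i)" "SL (?H m) \<subseteq> SL (?H i)" "PL (?H k) \<subseteq> PL (?H i)" "SL (?H k) \<subseteq> SL (?H i)"
          unfolding hl(1,2) using m k by blast+
        ultimately show "PL (?H k) \<subseteq> PL (?H i) \<and> SL (?H k) \<subseteq> SL (?H i) \<and> PL (?H k) \<subseteq> SL (?H i) \<and>
              SL (?H k) \<subseteq> PL (?H i) \<and> PiL (SL (?H k)) \<psi> \<subseteq> PL (?H i) \<and> SigmaL (PL (?H k)) \<psi> \<subseteq> SL (?H i)"
          by blast
      qed
      have f: "PL (?H i) \<subseteq> PiL (SL (?H i)) \<psi>" "SL (?H i) \<subseteq> SigmaL (PL (?H i)) \<psi>"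
      proof -
        have "PL (?H i) \<subseteq> SL (?H i)" using e unfolding hl(1) by blast
        thus "PL (?H i) \<subseteq> PiL (SL (?H i)) \<psi>" using subset_PiL by blast
        have "SL (?H i) \<subseteq> PL (?H i)" using e unfolding hl(2) by blast
        thus "SL (?H i) \<subseteq> SigmaL (PL (?H i)) \<psi>" using subset_SigmaL by blast
      qed
      obtain j0 where j0: "j0 \<in> underS r i" using ne by blast
      have g: "L \<subseteq> PL (?H i)" "L \<subseteq> SL (?H i)" using goodD(9,10)[OF IH[OF j0]] j0 unfolding hl(1,2) by blast+
      show ?thesis using a b c1 c2 d g f e by (rule goodI)
    qed
  qed
qed

lemma uncountable_sets:
  assumes inf: "infinite (UNIV :: 'v set)"
  shows "uncountable (UNIV :: 'v set set)"
proof
  assume cnt: "countable (UNIV :: 'v set set)"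
  obtain g :: "nat \<Rightarrow> 'v" where g: "inj g" using infinite_countable_subset[OF inf] by blast
  have ij: "inj_on (\<lambda>N. g ` N) (UNIV :: nat set set)" unfolding inj_on_def using inj_image_eq_iff[OF g] by blast
  have c2: "countable ((\<lambda>N. g ` N) ` (UNIV :: nat set set))" by (rule countable_subset[OF _ cnt]) simp
  have c3: "countable (UNIV :: nat set set)" by (rule countable_image_inj_on[OF c2 ij])
  have "\<exists>f::nat \<Rightarrow> nat set. range f = UNIV" using c3 uncountable_def[of "UNIV :: nat set set"] by blast
  then obtain f :: "nat \<Rightarrow> nat set" where f: "range f = UNIV" by blast
  have "{n. n \<notin> f n} \<in> range f" using f by simp
  then obtain k where k: "{n. n \<notin> f n} = f k" by blast
  have "k \<in> f k \<longleftrightarrow> k \<notin> f k" by (subst k[symmetric]) simp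
  thus False by blast
qed

lemma top_well_order:
  fixes r0 :: "'a rel" and t :: 'a
  assumes wo: "Well_order r0" and F: "Field r0 = UNIV"
  defines "r \<equiv> {(x, y). y = t \<or> (x \<noteq> t \<and> y \<noteq> t \<and> (x, y) \<in> r0)}"
  shows "Well_order r" "Field r = UNIV" "underS r t = UNIV - {t}"
proof -
  have mem: "\<And>x y. (x, y) \<in> r \<longleftrightarrow> y = t \<or> (x \<noteq> t \<and> y \<noteq> t \<and> (x, y) \<in> r0)"
    unfolding r_def by simp
  have p: "trans r0" "antisym r0" "total_on (Field r0) r0" using WO_props[OF wo] by auto
  have rf0: "refl_on (Field r0) r0" using wo by (simp add: well_order_on_def linear_order_on_def partial_order_on_def preorder_on_def)
  have xt: "\<And>x. (x, t) \<in> r" using mem by simp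
  show FU: "Field r = UNIV"
  proof (rule set_eqI)
    fix x show "x \<in> Field r \<longleftrightarrow> x \<in> UNIV" using FieldI1[OF xt[of x]] by simp
  qed
  have rf: "refl_on UNIV r"
  proof (rule refl_onI)
    fix x :: 'a
    have "(x, x) \<in> r0" using rf0 F by (simp add: refl_on_def)
    thus "(x, x) \<in> r" using mem by simp
  qed
  have tr: "trans r"
  proof (rule transI)
    fix x y z assume a: "(x, y) \<in> r" "(y, z) \<in> r"
    show "(x, z) \<in> r"
    proof (cases "z = t")
      case True thus ?thesis using mem by simp
    next
      case False
      hence "y \<noteq> t \<and> (y, z) \<in> r0" using a(2) mem by simp
      moreover hence "x \<noteq> t \<and> (x, y) \<in> r0" using a(1) mem by simp
      ultimately show ?thesis using mem False transD[OF p(1)] by metis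
    qed
  qed
  have an: "antisym r"
  proof (rule antisymI)
    fix x y assume a: "(x, y) \<in> r" "(y, x) \<in> r"
    show "x = y"
    proof (cases "x = t \<or> y = t")
      case True thus ?thesis using a mem by metis
    next
      case False thus ?thesis using a mem antisymD[OF p(2)] by metis
    qed
  qed
  have to: "total_on UNIV r" unfolding total_on_def
  proof (intro ballI impI)
    fix x y :: 'a assume "x \<noteq> y"
    show "(x, y) \<in> r \<or> (y, x) \<in> r"
    proof (cases "x = t \<or> y = t")
      case True thus ?thesis using mem by metis
    next
      case False
      hence "(x, y) \<in> r0 \<or> (y, x) \<in> r0" using p(3) F \<open>x \<noteq> y\<close> unfolding total_on_def by blast
      thus ?thesis using mem False by metis
    qed
  qed
  have lo: "Linear_order r" unfolding FU linear_order_on_def partial_order_on_def preorder_on_def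
    using rf tr an to by auto
  have wf0: "\<forall>A \<subseteq> Field r0. A \<noteq> {} \<longrightarrow> (\<exists>a \<in> A. \<forall>a' \<in> A. (a, a') \<in> r0)"
    using Linear_order_wf_diff_Id[of r0] wo by (simp add: well_order_on_def)
  have "\<forall>A \<subseteq> Field r. A \<noteq> {} \<longrightarrow> (\<exists>a \<in> A. \<forall>a' \<in> A. (a, a') \<in> r)"
  proof (intro allI impI)
    fix A assume "A \<subseteq> Field r" "A \<noteq> {}"
    show "\<exists>a \<in> A. \<forall>a' \<in> A. (a, a') \<in> r"
    proof (cases "A - {t} = {}")
      case True
      hence "A = {t}" using \<open>A \<noteq> {}\<close> by blast
      thus ?thesis using xt by simp
    next
      case False
      have "A - {t} \<subseteq> Field r0" using F by simp
      then obtain a where a: "a \<in> A - {t}" "\<forall>a' \<in> A - {t}. (a, a') \<in> r0" using wf0 False by meson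
      have "\<forall>a' \<in> A. (a, a') \<in> r"
      proof
        fix a' assume "a' \<in> A"
        show "(a, a') \<in> r"
        proof (cases "a' = t")
          case True thus ?thesis using xt by simp
        next
          case False thus ?thesis using a \<open>a' \<in> A\<close> mem by simp
        qed
      qed
      thus ?thesis using a(1) by blast
    qed
  qed
  hence "wf (r - Id)" using Linear_order_wf_diff_Id[OF lo] by blast
  thus "Well_order r" using lo by (simp add: well_order_on_def)
  show "underS r t = UNIV - {t}" unfolding underS_def using xt by auto
qed

lemma exists_xi:
  assumes inf: "infinite (UNIV :: 'v set)"
  shows "\<exists>(r :: 'v set rel) \<xi>. Well_order r \<and> \<xi> \<in> Field r \<and> underS r \<xi> \<noteq> {} \<and>
     (\<forall>f::nat \<Rightarrow> 'v set. (\<forall>n. f n \<in> underS r \<xi>) \<longrightarrow> (\<exists>m\<in>underS r \<xi>. \<forall>n. f n \<in> underS r m))"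
proof -
  have "\<exists>r0::'v set rel. Well_order r0 \<and> Field r0 = UNIV" by (rule well_ordering)
  then obtain r0 :: "'v set rel" where r00: "Well_order r0 \<and> Field r0 = UNIV" by (rule exE)
  have r0: "Well_order r0" "Field r0 = UNIV" using r00 by (rule conjunct1, rule conjunct2)
  define t :: "'v set" where "t = {}"
  define r where "r = {(x, y). y = t \<or> (x \<noteq> t \<and> y \<noteq> t \<and> (x, y) \<in> r0)}"
  have wo: "Well_order r" unfolding r_def by (rule top_well_order(1)[OF r0])
  have FU: "Field r = UNIV" unfolding r_def by (rule top_well_order(2)[OF r0])
  have ut: "underS r t = UNIV - {t}" unfolding r_def by (rule top_well_order(3)[OF r0])
  have "uncountable (UNIV - {t})"
  proof
    assume "countable (UNIV - {t})"
    hence "countable (insert t (UNIV - {t}))" by simp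
    moreover have "insert t (UNIV - {t}) = UNIV" by blast
    ultimately have "countable (UNIV :: 'v set set)" by simp
    thus False using uncountable_sets[OF inf] by blast
  qed
  hence tZ: "t \<in> {x. uncountable (underS r x)}" using ut by simp
  obtain \<xi> where xi: "\<xi> \<in> {x. uncountable (underS r x)}"
    and mn: "\<And>y. (y, \<xi>) \<in> r - Id \<Longrightarrow> y \<notin> {x. uncountable (underS r x)}"
    using wfE_min[OF WO_wf[OF wo] tZ] by blast
  have unc: "uncountable (underS r \<xi>)" using xi by simp
  have cnt: "\<And>y. y \<in> underS r \<xi> \<Longrightarrow> countable (underS r y)"
  proof -
    fix y assume "y \<in> underS r \<xi>"
    hence "(y, \<xi>) \<in> r - Id" by (simp add: underS_iff)
    thus "countable (underS r y)" using mn by blast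
  qed
  have ne: "underS r \<xi> \<noteq> {}" using unc by auto
  have bnd: "\<forall>f::nat \<Rightarrow> 'v set. (\<forall>n. f n \<in> underS r \<xi>) \<longrightarrow> (\<exists>m\<in>underS r \<xi>. \<forall>n. f n \<in> underS r m)"
  proof (intro allI impI)
    fix f :: "nat \<Rightarrow> 'v set" assume f: "\<forall>n. f n \<in> underS r \<xi>"
    define U where "U = (\<Union>n. insert (f n) (underS r (f n)))"
    have "\<And>n. countable (insert (f n) (underS r (f n)))" using cnt f by simp
    hence "countable U" unfolding U_def by (intro countable_UN) auto
    hence "uncountable (underS r \<xi> - U)" using unc uncountable_minus_countable by blast
    hence "underS r \<xi> - U \<noteq> {}" by (metis countable_empty)
    then obtain m where m: "m \<in> underS r \<xi>" "m \<notin> U" by blast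
    have "\<forall>n. f n \<in> underS r m"
    proof
      fix n
      have "f n = m \<or> f n \<in> underS r m \<or> m \<in> underS r (f n)" using WO_total[OF wo, of "f n" m] FU by simp
      moreover have "f n \<noteq> m" "m \<notin> underS r (f n)" using m(2) unfolding U_def by blast+
      ultimately show "f n \<in> underS r m" by blast
    qed
    thus "\<exists>m\<in>underS r \<xi>. \<forall>n. f n \<in> underS r m" using m by blast
  qed
  have "\<xi> \<in> Field r" using FU by simp
  thus ?thesis using wo ne bnd by (intro exI[of _ r] exI[of _ \<xi>] conjI)
qed

lemma antimono_min_finite:
  fixes a :: "nat \<Rightarrow> 'v::order"
  assumes fin: "finite (UNIV :: 'v set)" and am: "antimono a"
  shows "\<exists>N. \<forall>n. a N \<le> a n"
proof -
  have f: "finite (range a)" by (rule finite_subset[OF subset_UNIV fin])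
  have ne: "range a \<noteq> {}" by simp
  obtain m where m: "m \<in> range a" "\<forall>b\<in>range a. b \<le> m \<longrightarrow> m = b"
    using finite_has_minimal[OF f ne] by blast
  then obtain N where N: "m = a N" by blast
  have "\<forall>n. a N \<le> a n"
  proof
    fix n show "a N \<le> a n"
    proof (cases "n \<le> N")
      case True thus ?thesis by (rule antimonoD[OF am])
    next
      case False
      hence "N \<le> n" by simp
      hence "a n \<le> a N" by (rule antimonoD[OF am])
      moreover have "a n \<in> range a" by simp
      ultimately have "a N = a n" using m(2) N by blast
      thus ?thesis by simp
    qed
  qed
  thus ?thesis by blast
qed

lemma mono_max_finite:
  fixes a :: "nat \<Rightarrow> 'v::order"
  assumes fin: "finite (UNIV :: 'v set)" and am: "mono a"
  shows "\<exists>N. \<forall>n. a n \<le> a N"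
proof -
  have f: "finite (range a)" by (rule finite_subset[OF subset_UNIV fin])
  have ne: "range a \<noteq> {}" by simp
  obtain m where m: "m \<in> range a" "\<forall>b\<in>range a. m \<le> b \<longrightarrow> m = b"
    using finite_has_maximal[OF f ne] by blast
  then obtain N where N: "m = a N" by blast
  have "\<forall>n. a n \<le> a N"
  proof
    fix n show "a n \<le> a N"
    proof (cases "n \<le> N")
      case True thus ?thesis by (rule monoD[OF am])
    next
      case False
      hence "N \<le> n" by simp
      hence "a N \<le> a n" by (rule monoD[OF am])
      moreover have "a n \<in> range a" by simp
      ultimately have "a N = a n" using m(2) N by blast
      thus ?thesis by simp
    qed
  qed
  thus ?thesis by blast
qed

lemma finite_complete:
  fixes L :: "'v::lattice set" and \<phi> :: "'v \<Rightarrow> 'e::ordered_ab_group_add"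
  assumes fin: "finite (UNIV :: 'v set)" and val: "valuation L \<phi>"
  shows "complete L \<phi>"
proof -
  have mono\<phi>: "\<And>x y. x \<in> L \<Longrightarrow> y \<in> L \<Longrightarrow> x \<le> y \<Longrightarrow> \<phi> x \<le> \<phi> y" using val unfolding valuation_def by blast
  have "Pi_complete L \<phi>" unfolding Pi_complete_def
  proof (intro allI impI)
    fix a assume a: "conv_dec L \<phi> a"
    hence aL: "\<And>n. a n \<in> L" and am: "antimono a" unfolding conv_dec_def by auto
    obtain N where N: "\<forall>n. a N \<le> a n" using antimono_min_finite[OF fin am] by blast
    have "is_inf_seq a (a N)" unfolding is_inf_seq_def using N by blast
    hence e1: "inf_seq a = a N" by (rule is_inf_seq_unique)
    have "is_inf_seq (\<lambda>n. \<phi> (a n)) (\<phi> (a N))" unfolding is_inf_seq_def using N mono\<phi> aL by blast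
    hence e2: "inf_seq (\<lambda>n. \<phi> (a n)) = \<phi> (a N)" by (rule is_inf_seq_unique)
    show "inf_seq a \<in> L \<and> \<phi> (inf_seq a) = inf_seq (\<lambda>n. \<phi> (a n))" using e1 e2 aL by simp
  qed
  moreover have "Sigma_complete L \<phi>" unfolding Sigma_complete_def
  proof (intro allI impI)
    fix a assume a: "conv_inc L \<phi> a"
    hence aL: "\<And>n. a n \<in> L" and am: "mono a" unfolding conv_inc_def by auto
    obtain N where N: "\<forall>n. a n \<le> a N" using mono_max_finite[OF fin am] by blast
    have "is_sup_seq a (a N)" unfolding is_sup_seq_def using N by blast
    hence e1: "sup_seq a = a N" by (rule is_sup_seq_unique)
    have "is_sup_seq (\<lambda>n. \<phi> (a n)) (\<phi> (a N))" unfolding is_sup_seq_def using N mono\<phi> aL by blast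
    hence e2: "sup_seq (\<lambda>n. \<phi> (a n)) = \<phi> (a N)" by (rule is_sup_seq_unique)
    show "sup_seq a \<in> L \<and> \<phi> (sup_seq a) = sup_seq (\<lambda>n. \<phi> (a n))" using e1 e2 aL by simp
  qed
  ultimately show ?thesis unfolding complete_def by blast
qed

lemma closed_complete:
  fixes L C :: "'v::lattice set" and \<phi> \<psi> :: "'v \<Rightarrow> 'e::ordered_ab_group_add" and r :: "'i rel"
  assumes wo: "Well_order r" and sd: "sigma_distributive TYPE('v)" and rc: "R_complete TYPE('e)"
    and slL: "sublattice L" and val: "valuation C \<psi>" and ext: "extends C \<psi> L \<phi>"
    and cpl: "complete C \<psi>"
    and ne: "underS r \<xi> \<noteq> {}"
    and bnd: "\<forall>f::nat \<Rightarrow> 'i. (\<forall>n. f n \<in> underS r \<xi>) \<longrightarrow> (\<exists>m\<in>underS r \<xi>. \<forall>n. f n \<in> underS r m)"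
  shows "complete (PL (hier r L \<phi> \<xi>)) \<psi>"
proof -
  let ?H = "hier r L \<phi>"
  have G: "\<And>i. good C \<psi> L r ?H i" using good_all[OF wo sd rc slL val ext cpl] by blast
  have pc: "Pi_complete C \<psi>" and sc: "Sigma_complete C \<psi>" using cpl unfolding complete_def by auto
  have nsucc: "\<not> (\<exists>j\<in>underS r \<xi>. underS r \<xi> = insert j (underS r j))"
  proof
    assume "\<exists>j\<in>underS r \<xi>. underS r \<xi> = insert j (underS r j)"
    then obtain j where j: "j \<in> underS r \<xi>" "underS r \<xi> = insert j (underS r j)" by blast
    obtain m where m: "m \<in> underS r \<xi>" "j \<in> underS r m" using bnd j(1) by fastforce
    have "m = j \<or> m \<in> underS r j" using m(1) j(2) by blast
    thus False using m(2) WO_irrefl[of j r] WO_not_both[OF wo] by blast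
  qed
  have hl: "PL (?H \<xi>) = (\<Union>j\<in>underS r \<xi>. PL (?H j))" by (rule hier_lim(1)[OF wo ne nsucc])
  have above2: "\<And>m. m \<in> underS r \<xi> \<Longrightarrow> \<exists>m2\<in>underS r \<xi>. m \<in> underS r m2"
  proof -
    fix m assume "m \<in> underS r \<xi>"
    thus "\<exists>m2\<in>underS r \<xi>. m \<in> underS r m2" using bnd[rule_format, of "\<lambda>n. m"] by blast
  qed
  have stage: "\<And>a :: nat \<Rightarrow> 'v. (\<forall>n. a n \<in> PL (?H \<xi>)) \<Longrightarrow>
      \<exists>m\<in>underS r \<xi>. \<forall>n. a n \<in> PL (?H m) \<and> a n \<in> SL (?H m)"
  proof -
    fix a :: "nat \<Rightarrow> 'v" assume a: "\<forall>n. a n \<in> PL (?H \<xi>)"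
    define j where "j = (\<lambda>n. SOME j. j \<in> underS r \<xi> \<and> a n \<in> PL (?H j))"
    have jp: "\<And>n. j n \<in> underS r \<xi> \<and> a n \<in> PL (?H (j n))"
    proof -
      fix n
      have "\<exists>j. j \<in> underS r \<xi> \<and> a n \<in> PL (?H j)" using a hl by blast
      thus "j n \<in> underS r \<xi> \<and> a n \<in> PL (?H (j n))" unfolding j_def by (rule someI_ex)
    qed
    obtain m where m: "m \<in> underS r \<xi>" "\<forall>n. j n \<in> underS r m" using bnd jp by blast
    have "\<forall>n. a n \<in> PL (?H m) \<and> a n \<in> SL (?H m)"
    proof
      fix n
      have "PL (?H (j n)) \<subseteq> PL (?H m)" "PL (?H (j n)) \<subseteq> SL (?H m)"
        using goodD(13,15)[OF G m(2)[rule_format, of n]] by auto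
      thus "a n \<in> PL (?H m) \<and> a n \<in> SL (?H m)" using jp[of n] by blast
    qed
    thus "\<exists>m\<in>underS r \<xi>. \<forall>n. a n \<in> PL (?H m) \<and> a n \<in> SL (?H m)" using m(1) by blast
  qed
  have "Pi_complete (PL (?H \<xi>)) \<psi>" unfolding Pi_complete_def
  proof (intro allI impI)
    fix a assume a: "conv_dec (PL (?H \<xi>)) \<psi> a"
    have aX: "\<forall>n. a n \<in> PL (?H \<xi>)" using a unfolding conv_dec_def by blast
    obtain m where m: "m \<in> underS r \<xi>" "\<forall>n. a n \<in> SL (?H m)" using stage[OF aX] by blast
    obtain m2 where m2: "m2 \<in> underS r \<xi>" "m \<in> underS r m2" using above2[OF m(1)] by blast
    have "conv_dec (SL (?H m)) \<psi> a" using a m(2) unfolding conv_dec_def by blast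
    hence "inf_seq a \<in> PiL (SL (?H m)) \<psi>" unfolding PiL_def by blast
    also have "\<dots> \<subseteq> PL (?H m2)" using goodD(17)[OF G m2(2)] .
    also have "\<dots> \<subseteq> PL (?H \<xi>)" using goodD(13)[OF G m2(1)] .
    finally have "inf_seq a \<in> PL (?H \<xi>)" .
    moreover have "conv_dec C \<psi> a" using a goodD(1)[OF G] unfolding conv_dec_def by blast
    ultimately show "inf_seq a \<in> PL (?H \<xi>) \<and> \<psi> (inf_seq a) = inf_seq (\<lambda>n. \<psi> (a n))"
      using pc unfolding Pi_complete_def by blast
  qed
  moreover have "Sigma_complete (PL (?H \<xi>)) \<psi>" unfolding Sigma_complete_def
  proof (intro allI impI)
    fix a assume a: "conv_inc (PL (?H \<xi>)) \<psi> a"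
    have aX: "\<forall>n. a n \<in> PL (?H \<xi>)" using a unfolding conv_inc_def by blast
    obtain m where m: "m \<in> underS r \<xi>" "\<forall>n. a n \<in> PL (?H m)" using stage[OF aX] by blast
    obtain m2 where m2: "m2 \<in> underS r \<xi>" "m \<in> underS r m2" using above2[OF m(1)] by blast
    have "conv_inc (PL (?H m)) \<psi> a" using a m(2) unfolding conv_inc_def by blast
    hence "sup_seq a \<in> SigmaL (PL (?H m)) \<psi>" unfolding SigmaL_def by blast
    also have "\<dots> \<subseteq> SL (?H m2)" using goodD(18)[OF G m2(2)] .
    also have "\<dots> \<subseteq> PL (?H \<xi>)" using goodD(16)[OF G m2(1)] .
    finally have "sup_seq a \<in> PL (?H \<xi>)" .
    moreover have "conv_inc C \<psi> a" using a goodD(1)[OF G] unfolding conv_inc_def by blast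
    ultimately show "sup_seq a \<in> PL (?H \<xi>) \<and> \<psi> (sup_seq a) = sup_seq (\<lambda>n. \<psi> (a n))"
      using sc unfolding Sigma_complete_def by blast
  qed
  ultimately show ?thesis unfolding complete_def by blast
qed

theorem proposition5p8:
  fixes L C :: "'v::lattice set"
    and \<phi> \<psi> :: "'v \<Rightarrow> 'e::ordered_ab_group_add"
  assumes "valuation_system L \<phi>"
    and "sublattice C" and "valuation C \<psi>" and "extends C \<psi> L \<phi>" and "complete C \<psi>"
  shows "\<exists>Lb \<phi>b. sublattice Lb \<and> valuation Lb \<phi>b \<and> extends Lb \<phi>b L \<phi> \<and> complete Lb \<phi>b \<and>
           (\<forall>C' \<psi>'. sublattice C' \<and> valuation C' \<psi>' \<and> extends C' \<psi>' L \<phi> \<and> complete C' \<psi>'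
                \<longrightarrow> extends C' \<psi>' Lb \<phi>b) \<and>
           (\<exists>(r :: 'v set rel) \<xi>. Well_order r \<and> \<xi> \<in> Field r \<and>
                Pi_level_extendible r \<xi> L \<phi> \<and> Pi_level_L r \<xi> L \<phi> = Lb \<and>
                (\<forall>c\<in>Lb. Pi_level_fun r \<xi> L \<phi> c = \<phi>b c))"
proof -
  have sd: "sigma_distributive TYPE('v)" and slL: "sublattice L" and rc: "R_complete TYPE('e)"
    and valL: "valuation L \<phi>" using assms(1) unfolding valuation_system_def by auto
  note val = assms(3) and ext = assms(4) and cpl = assms(5)
  show ?thesis
  proof (cases "finite (UNIV :: 'v set)")
    case True
    have cL: "complete L \<phi>" by (rule finite_complete[OF True valL])
    have eL: "extends L \<phi> L \<phi>" unfolding extends_def by simp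
    have "\<exists>r0::'v set rel. Well_order r0 \<and> Field r0 = UNIV" by (rule well_ordering)
    then obtain r0 :: "'v set rel" where r00: "Well_order r0 \<and> Field r0 = UNIV" by (rule exE)
    have wo: "Well_order r0" and F: "Field r0 = UNIV" using r00 by (rule conjunct1, rule conjunct2)
    obtain \<xi> where xi: "\<xi> \<in> (UNIV :: 'v set set)" and mn: "\<And>y. (y, \<xi>) \<in> r0 - Id \<Longrightarrow> y \<notin> (UNIV :: 'v set set)"
      using wfE_min[OF WO_wf[OF wo], of "{}" UNIV] by blast
    have u: "underS r0 \<xi> = {}" using mn underS_iff by fastforce
    have h: "hier r0 L \<phi> \<xi> = \<lparr>PL = L, Pf = \<phi>, Pok = True, SL = L, Sf = \<phi>, Sok = True\<rparr>"
      by (rule hier_zero[OF wo u])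
    have lev: "Well_order r0 \<and> \<xi> \<in> Field r0 \<and> Pi_level_extendible r0 \<xi> L \<phi> \<and> Pi_level_L r0 \<xi> L \<phi> = L \<and>
                (\<forall>c\<in>L. Pi_level_fun r0 \<xi> L \<phi> c = \<phi> c)"
      using wo F unfolding Pi_level_extendible_def Pi_level_L_def Pi_level_fun_def h by simp
    show ?thesis
      apply (rule exI[of _ L], rule exI[of _ \<phi>])
      using slL valL eL cL lev by blast
  next
    case False
    obtain r :: "'v set rel" and \<xi> where wo: "Well_order r" and xF: "\<xi> \<in> Field r" and ne: "underS r \<xi> \<noteq> {}"
      and bnd: "\<forall>f::nat \<Rightarrow> 'v set. (\<forall>n. f n \<in> underS r \<xi>) \<longrightarrow> (\<exists>m\<in>underS r \<xi>. \<forall>n. f n \<in> underS r m)"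
      using exists_xi[OF False] by blast
    let ?H = "hier r L \<phi>"
    let ?Lb = "PL (?H \<xi>)"
    have gC: "good C \<psi> L r ?H \<xi>" using good_all[OF wo sd rc slL val ext cpl] by blast
    have sl: "sublattice ?Lb" using goodD(7)[OF gC] .
    have vl: "valuation ?Lb \<psi>" using valuation_subset[OF val goodD(1)[OF gC]] .
    have ex: "extends ?Lb \<psi> L \<phi>" using goodD(9)[OF gC] ext unfolding extends_def by blast
    have cp: "complete ?Lb \<psi>" using closed_complete[OF wo sd rc slL val ext cpl ne bnd] .
    have mi: "\<forall>C' \<psi>'. sublattice C' \<and> valuation C' \<psi>' \<and> extends C' \<psi>' L \<phi> \<and> complete C' \<psi>'
                \<longrightarrow> extends C' \<psi>' ?Lb \<psi>"
    proof (intro allI impI)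
      fix C' and \<psi>' :: "'v \<Rightarrow> 'e"
      assume a: "sublattice C' \<and> valuation C' \<psi>' \<and> extends C' \<psi>' L \<phi> \<and> complete C' \<psi>'"
      have g': "good C' \<psi>' L r ?H \<xi>" using good_all[OF wo sd rc slL] a by blast
      show "extends C' \<psi>' ?Lb \<psi>" unfolding extends_def
        using goodD(1,5)[OF g'] goodD(5)[OF gC] by auto
    qed
    have lev: "Well_order r \<and> \<xi> \<in> Field r \<and> Pi_level_extendible r \<xi> L \<phi> \<and> Pi_level_L r \<xi> L \<phi> = ?Lb \<and>
                (\<forall>c\<in>?Lb. Pi_level_fun r \<xi> L \<phi> c = \<psi> c)"
      using wo xF goodD(3,5)[OF gC] unfolding Pi_level_extendible_def Pi_level_L_def Pi_level_fun_def by blast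
    show ?thesis
      apply (rule exI[of _ ?Lb], rule exI[of _ \<psi>])
      using sl vl ex cp mi lev by blast
  qed
qed

end
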